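(* Let $P\subset\mathbb{R}^n$ be the moment polytope of a compact toric manifold, with the notation of the context. Then every formal series of the form $$\sum_{k=1}^{\infty}a_k\,\mathfrak w_1^{e_{k,1}}\cdots\mathfrak w_m^{e_{k,m}}\,w_{m+1}^{e_{k,m+1}}\cdots w_B^{e_{k,B}}\,z_1^{f_{k,1}}\cdots z_m^{f_{k,m}},$$ where $a_k\in\Lambda_0$, $\lim_{k\to\infty}\mathfrak v_T(a_k)=\infty$, $e_{k,i}\in\mathbb{Z}$ for $i\le m$, $e_{k,i}\in\mathbb{Z}_{\ge0}$ for $i>m$, and $f_{k,j}\in\mathbb{Z}_{\ge0}$, is an element of $\Lambda_0^P\langle\!\langle\mathfrak w,\mathfrak w^{-1},w,y,y^{-1}\rangle\!\rangle$. Conversely, every element of $\Lambda_0^P\langle\!\langle\mathfrak w,\mathfrak w^{-1},w,y,y^{-1}\rangle\!\rangle$ can be written as a series of this form.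
   Context: $R$ is a field containing $\mathbb{Q}$. $\Lambda$ is the universal Novikov field of formal sums $\sum_i a_iT^{\lambda_i}$ with $a_i\in R$, $\lambda_i\in\mathbb{R}$ increasing to $\infty$; $\mathfrak v_T(\sum a_iT^{\lambda_i})=\inf\{\lambda_i: a_i\ne0\}$; $\Lambda_0=\{x:\mathfrak v_T(x)\ge0\}$. The polytope: $P=\{u\in\mathbb{R}^n:\ \ell_j(u)\ge0,\ j=1,\dots,m\}$, $\ell_j(u)=\langle\vec v_j,u\rangle-\lambda_j$, with $\vec v_j=(v_{j,1},\dots,v_{j,n})\in\mathbb{Z}^n$ the primitive inward normals to the $m$ facets; $P$ is a Delzant polytope (the moment polytope of a compact toric manifold: each vertex lies on exactly $n$ facets whose normals form a $\mathbb{Z}$-basis of $\mathbb{Z}^n$). Fix an integer $B\ge m$. Consider the ring $\Lambda[\mathfrak w_1^{\pm1},\dots,\mathfrak w_m^{\pm1},w_{m+1},\dots,w_B,y_1^{\pm1},\dots,y_n^{\pm1}]$. For $u\in\operatorname{Int}P$ define $\mathfrak v_T^u\big(\sum_k a_k\,\mathfrak w^{e_k}w^{e'_k}y_1^{f_{k,1}}\cdots y_n^{f_{k,n}}\big)=\inf_k\{\mathfrak v_T(a_k)+\langle f_k,u\rangle: a_k\neq0\}$ (the variables $\mathfrak w,w$ have weight $0$), and $\mathfrak v_T^P(x)=\inf\{\mathfrak v_T^u(x): u\in\operatorname{Int}P\}$, a non-Archimedean valuation. $\Lambda^P\langle\!\langle\mathfrak w,\mathfrak w^{-1},w,y,y^{-1}\rangle\!\rangle$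 denotes the completion with respect to $\mathfrak v_T^P$, and $\Lambda_0^P\langle\!\langle\mathfrak w,\mathfrak w^{-1},w,y,y^{-1}\rangle\!\rangle=\{x:\mathfrak v_T^P(x)\ge0\}$. Finally, $z_j=T^{-\lambda_j}y_1^{v_{j,1}}\cdots y_n^{v_{j,n}}$ for $j=1,\dots,m$ (so that $\mathfrak v_T^u(z_j)=\ell_j(u)$). *)

theory Defs
  imports "HOL-Analysis.Analysis"
begin

text \<open>Universal Novikov field over R: an element is a coefficient function
  real => R (coefficient of T^lambda) whose support meets every half-line
  below C in a finite set (i.e. the exponents increase to infinity).\<close>

definition novikov :: "(real \<Rightarrow> 'r::zero) \<Rightarrow> bool" where
  "novikov a \<longleftrightarrow> (\<forall>C. finite {l. a l \<noteq> 0 \<and> l \<le> C})"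

text \<open>T-adic valuation, with value infinity at 0.\<close>
definition vT :: "(real \<Rightarrow> 'r::zero) \<Rightarrow> ereal" where
  "vT a = (INF l\<in>{l. a l \<noteq> 0}. ereal l)"

definition rvec :: "int^'n \<Rightarrow> real^'n" where
  "rvec f = (\<chi> i. real_of_int (f $ i))"

text \<open>Facets are indexed by j < m (0-based); ell j u = <v_j,u> - lambda_j.\<close>
definition ell :: "(nat \<Rightarrow> int^'n) \<Rightarrow> (nat \<Rightarrow> real) \<Rightarrow> nat \<Rightarrow> real^'n \<Rightarrow> real" where
  "ell v lam j u = rvec (v j) \<bullet> u - lam j"

definition polytopeP :: "nat \<Rightarrow> (nat \<Rightarrow> int^'n) \<Rightarrow> (nat \<Rightarrow> real) \<Rightarrow> (real^'n) set" where
  "polytopeP m v lam = {u. \<forall>j<m. ell v lam j u \<ge> 0}"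

definition delzant :: "nat \<Rightarrow> (nat \<Rightarrow> int^'n) \<Rightarrow> (nat \<Rightarrow> real) \<Rightarrow> bool" where
  "delzant m v lam \<longleftrightarrow>
     (let P = polytopeP m v lam in
       bounded P \<and> interior P \<noteq> {} \<and>
       (\<forall>j<m. {u\<in>P. ell v lam j u = 0} facet_of P) \<and>
       (\<forall>j<m. \<forall>k<m. {u\<in>P. ell v lam j u = 0} = {u\<in>P. ell v lam k u = 0} \<longrightarrow> j = k) \<and>
       (\<forall>F. F facet_of P \<longrightarrow> (\<exists>j<m. F = {u\<in>P. ell v lam j u = 0})) \<and>
       (\<forall>j<m. \<forall>d::int. d > 0 \<longrightarrow> (\<forall>i. d dvd (v j $ i)) \<longrightarrow> d = 1) \<and>
       (\<forall>p. p extreme_point_of P \<longrightarrow>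
          (let J = {j. j < m \<and> ell v lam j p = 0} in
             card J = CARD('n) \<and>
             (\<forall>x::int^'n. \<exists>c::nat \<Rightarrow> int. x = (\<Sum>j\<in>J. c j *s v j)) \<and>
             (\<forall>c::nat \<Rightarrow> int. (\<Sum>j\<in>J. c j *s v j) = 0 \<longrightarrow> (\<forall>j\<in>J. c j = 0)))))"

text \<open>Weight of y^f for the valuation v_T^P: inf over Int P of <f,u>.\<close>
definition wtP :: "(real^'n) set \<Rightarrow> int^'n \<Rightarrow> real" where
  "wtP P f = (INF u\<in>interior P. rvec f \<bullet> u)"

text \<open>Exponent vectors of the variables frak w_1..frak w_m (indices 0..m-1, in Z)
  and w_(m+1)..w_B (indices m..B-1, nonnegative).\<close>
definition admissible_exp :: "nat \<Rightarrow> nat \<Rightarrow> (nat \<Rightarrow> int) \<Rightarrow> bool" where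
  "admissible_exp m B E \<longleftrightarrow> (\<forall>i. (B \<le> i \<longrightarrow> E i = 0) \<and> (m \<le> i \<and> i < B \<longrightarrow> 0 \<le> E i))"

text \<open>An element of the completion is represented by its coefficient function:
  x (mu, E, f) = coefficient of T^mu frak w^E w^E y^f.  The valuation v_T^P is
  the minimum over the support of mu + wtP f.\<close>
definition valP :: "(real^'n) set \<Rightarrow> (real \<times> (nat \<Rightarrow> int) \<times> (int^'n) \<Rightarrow> 'r::zero) \<Rightarrow> ereal" where
  "valP P x = (INF k\<in>{k. x k \<noteq> 0}. ereal (fst k + wtP P (snd (snd k))))"

text \<open>The completion Lambda^P<<frak w, frak w^-1, w, y, y^-1>>: formal series whose
  terms have v_T^P-valuation tending to infinity.\<close>
definition completionP :: "(real^'n) set \<Rightarrow> nat \<Rightarrow> nat \<Rightarrow>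
    (real \<times> (nat \<Rightarrow> int) \<times> (int^'n) \<Rightarrow> 'r::zero) set" where
  "completionP P m B = {x.
     (\<forall>k. x k \<noteq> 0 \<longrightarrow> admissible_exp m B (fst (snd k))) \<and>
     (\<forall>C. finite {k. x k \<noteq> 0 \<and> fst k + wtP P (snd (snd k)) \<le> C})}"

definition completion0P :: "(real^'n) set \<Rightarrow> nat \<Rightarrow> nat \<Rightarrow>
    (real \<times> (nat \<Rightarrow> int) \<times> (int^'n) \<Rightarrow> 'r::zero) set" where
  "completion0P P m B = {x \<in> completionP P m B. valP P x \<ge> 0}"

text \<open>The term a * frak w^E w^E z_1^F_1 ... z_m^F_m, with
  z_j = T^(-lambda_j) y^(v_j), as a coefficient function.\<close>
definition series_term :: "nat \<Rightarrow> (nat \<Rightarrow> int^'n) \<Rightarrow> (nat \<Rightarrow> real) \<Rightarrow>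
    (real \<Rightarrow> 'r::zero) \<Rightarrow> (nat \<Rightarrow> int) \<Rightarrow> (nat \<Rightarrow> nat) \<Rightarrow>
    (real \<times> (nat \<Rightarrow> int) \<times> (int^'n) \<Rightarrow> 'r)" where
  "series_term m v lam a E F = (\<lambda>(mu, E', f).
     if E' = E \<and> f = (\<Sum>j<m. of_nat (F j) *s v j)
     then a (mu + (\<Sum>j<m. real (F j) * lam j)) else 0)"

definition series_data :: "nat \<Rightarrow> nat \<Rightarrow> (nat \<Rightarrow> real \<Rightarrow> 'r::zero) \<Rightarrow>
    (nat \<Rightarrow> nat \<Rightarrow> int) \<Rightarrow> bool" where
  "series_data m B a E \<longleftrightarrow>
     (\<forall>k. novikov (a k) \<and> vT (a k) \<ge> 0 \<and> admissible_exp m B (E k)) \<and>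
     ((\<lambda>k. vT (a k)) \<longlonglongrightarrow> \<infinity>)"

definition series_converges_to :: "(real^'n) set \<Rightarrow> nat \<Rightarrow> (nat \<Rightarrow> int^'n) \<Rightarrow> (nat \<Rightarrow> real) \<Rightarrow>
    (nat \<Rightarrow> real \<Rightarrow> 'r::ab_group_add) \<Rightarrow> (nat \<Rightarrow> nat \<Rightarrow> int) \<Rightarrow> (nat \<Rightarrow> nat \<Rightarrow> nat) \<Rightarrow>
    (real \<times> (nat \<Rightarrow> int) \<times> (int^'n) \<Rightarrow> 'r) \<Rightarrow> bool" where
  "series_converges_to P m v lam a E F x \<longleftrightarrow>
     ((\<lambda>N. valP P (\<lambda>key. x key - (\<Sum>k<N. series_term m v lam (a k) (E k) (F k) key))) \<longlonglongrightarrow> \<infinity>)"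

end

theory Submission
  imports Defs
begin
lemma rvec_add: "rvec (a + b) = rvec a + rvec b"
  by (simp add: rvec_def vec_eq_iff)
lemma rvec_zero[simp]: "rvec 0 = 0"
  by (simp add: rvec_def vec_eq_iff)
lemma rvec_smult: "rvec (c *s a) = real_of_int c *\<^sub>R rvec a"
  by (simp add: rvec_def vec_eq_iff)
lemma rvec_sum: "rvec (\<Sum>j\<in>A. g j) = (\<Sum>j\<in>A. rvec (g j))"
  by (induction A rule: infinite_finite_induct) (auto simp: rvec_add)

lemma P_closed: "closed (polytopeP m v lam)"
proof -
  have "polytopeP m v lam = (\<Inter>j\<in>{..<m}. {u. rvec (v j) \<bullet> u \<ge> lam j})"
    by (auto simp: polytopeP_def ell_def)
  then show ?thesis by (auto intro!: closed_INT closed_halfspace_ge)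
qed

lemma P_convex: "convex (polytopeP m v lam)"
proof -
  have "polytopeP m v lam = (\<Inter>j\<in>{..<m}. {u. rvec (v j) \<bullet> u \<ge> lam j})"
    by (auto simp: polytopeP_def ell_def)
  then show ?thesis by (auto intro!: convex_INT convex_halfspace_ge)
qed

lemma wtP_ge:
  assumes "interior P \<noteq> {}" "\<And>u. u \<in> P \<Longrightarrow> c \<le> rvec f \<bullet> u"
  shows "c \<le> wtP P f"
  unfolding wtP_def using assms interior_subset by (auto intro!: cINF_greatest)

lemma wtP_le:
  fixes P :: "(real^'n) set"
  assumes "convex P" "bounded P" "interior P \<noteq> {}" "p \<in> P"
  shows "wtP P f \<le> rvec f \<bullet> p"
proof -
  obtain c where c: "c \<in> interior P" using assms by auto
  obtain M where M: "\<And>u. u \<in> P \<Longrightarrow> norm u \<le> M" using assms(2) bounded_iff by blast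
  have bdd: "bdd_below ((\<lambda>u. rvec f \<bullet> u) ` interior P)"
  proof (rule bdd_belowI2)
    fix u assume "u \<in> interior P"
    then have "u \<in> P" using interior_subset by auto
    then have "\<bar>rvec f \<bullet> u\<bar> \<le> norm (rvec f) * M"
      by (meson M Cauchy_Schwarz_ineq2 mult_left_mono norm_ge_zero order_trans)
    then show "- (norm (rvec f) * M) \<le> rvec f \<bullet> u" by linarith
  qed
  have key: "wtP P f \<le> rvec f \<bullet> p + e * (rvec f \<bullet> c - rvec f \<bullet> p)" if "0 < e" "e \<le> 1" for e
  proof -
    have "p - e *\<^sub>R (p - c) \<in> interior P"
      by (rule mem_interior_convex_shrink) (use assms c that in auto)
    then have "wtP P f \<le> rvec f \<bullet> (p - e *\<^sub>R (p - c))"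
      unfolding wtP_def by (rule cINF_lower[OF bdd])
    also have "\<dots> = rvec f \<bullet> p + e * (rvec f \<bullet> c - rvec f \<bullet> p)"
      by (simp add: inner_diff_right algebra_simps)
    finally show ?thesis .
  qed
  show ?thesis
  proof (rule ccontr)
    assume "\<not> ?thesis"
    then have d: "wtP P f - rvec f \<bullet> p > 0" by simp
    define K where "K = \<bar>rvec f \<bullet> c - rvec f \<bullet> p\<bar> + 1"
    have K: "K > 0" by (simp add: K_def)
    define e where "e = min 1 ((wtP P f - rvec f \<bullet> p) / (2 * K))"
    have e0: "0 < e" "e \<le> 1" using d K by (auto simp: e_def)
    have "e * (rvec f \<bullet> c - rvec f \<bullet> p) \<le> e * K"
      using e0 by (intro mult_left_mono) (auto simp: K_def)
    also have "\<dots> \<le> (wtP P f - rvec f \<bullet> p) / (2 * K) * K"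
      using K by (intro mult_right_mono) (auto simp: e_def)
    also have "\<dots> = (wtP P f - rvec f \<bullet> p) / 2" using K by simp
    finally have A: "e * (rvec f \<bullet> c - rvec f \<bullet> p) \<le> (wtP P f - rvec f \<bullet> p) / 2" .
    have B: "wtP P f \<le> rvec f \<bullet> p + e * (rvec f \<bullet> c - rvec f \<bullet> p)" using key[OF e0] .
    from A B d show False by argo
  qed
qed

lemma exists_F:
  fixes v :: "nat \<Rightarrow> int^'n" and f :: "int^'n"
  assumes dz: "delzant m v lam"
  shows "\<exists>F::nat\<Rightarrow>nat. (\<Sum>j<m. of_nat (F j) *s v j) = f \<and>
           wtP (polytopeP m v lam) f \<le> (\<Sum>j<m. real (F j) * lam j)"
proof -
  define P where "P = polytopeP m v lam"
  have bP: "bounded P" and iP: "interior P \<noteq> {}" and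
    vert: "\<And>p. p extreme_point_of P \<Longrightarrow>
          card {j. j < m \<and> ell v lam j p = 0} = CARD('n) \<and>
          (\<forall>x::int^'n. \<exists>c::nat \<Rightarrow> int. x = (\<Sum>j\<in>{j. j < m \<and> ell v lam j p = 0}. c j *s v j))"
    using dz unfolding delzant_def P_def Let_def by blast+
  have cP: "convex P" "closed P" using P_convex P_closed unfolding P_def by auto
  have compP: "compact P" using bP cP by (simp add: compact_eq_bounded_closed)
  have neP: "P \<noteq> {}" using iP interior_subset by blast
  have "continuous_on P (\<lambda>u. rvec f \<bullet> u)" by (intro continuous_intros)
  then obtain x0 where x0: "x0 \<in> P" "\<And>y. y \<in> P \<Longrightarrow> rvec f \<bullet> x0 \<le> rvec f \<bullet> y"
    using continuous_attains_inf[OF compP neP, of "\<lambda>u. rvec f \<bullet> u"] by blast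
  define M where "M = P \<inter> {u. rvec f \<bullet> u = rvec f \<bullet> x0}"
  have faceM: "M face_of P" unfolding M_def
    by (rule face_of_Int_supporting_hyperplane_ge) (use cP x0 in auto)
  have "compact M" using face_of_imp_compact[OF cP(1) compP faceM] .
  moreover have "convex M" using faceM face_of_imp_convex by blast
  moreover have "M \<noteq> {}" using x0 by (auto simp: M_def)
  ultimately obtain p where "p extreme_point_of M" using extreme_point_exists_convex by blast
  then have pext: "p extreme_point_of P" and pM: "p \<in> M"
    using extreme_point_of_face[OF faceM] by auto
  have pP: "p \<in> P" and pmin: "\<And>y. y \<in> P \<Longrightarrow> rvec f \<bullet> p \<le> rvec f \<bullet> y"
    using pM x0 by (auto simp: M_def)
  define J where "J = {j. j < m \<and> ell v lam j p = 0}"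
  have cardJ: "card J = CARD('n)" and spanJ: "\<And>x::int^'n. \<exists>c::nat \<Rightarrow> int. x = (\<Sum>j\<in>J. c j *s v j)"
    using vert[OF pext] unfolding J_def by auto
  have finJ: "finite J" and Jm: "J \<subseteq> {..<m}" by (auto simp: J_def)
  obtain c where c: "f = (\<Sum>j\<in>J. c j *s v j)" using spanJ by blast
  have cpos: "c k \<ge> 0" if kJ: "k \<in> J" for k
  proof -
    define T where "T = rvec ` v ` (J - {k})"
    have finT: "finite T" using finJ by (simp add: T_def)
    have "card T \<le> card (J - {k})" unfolding T_def
      by (metis card_image_le finJ finite_Diff finite_imageI image_image)
    also have "\<dots> < CARD('n)" using cardJ kJ finJ
      by (metis card_Diff1_less)
    finally have cT: "card T < CARD('n)" .
    have "span T \<noteq> UNIV"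
    proof
      assume "span T = UNIV"
      then have "dim (UNIV :: (real^'n) set) \<le> card T" by (intro dim_le_card finT) auto
      then show False using cT by simp
    qed
    then obtain a :: "real^'n" where a0: "a \<noteq> 0" and aT: "\<And>x. x \<in> span T \<Longrightarrow> a \<bullet> x = 0"
      using span_not_UNIV_orthogonal by blast
    have aoth: "a \<bullet> rvec (v j) = 0" if "j \<in> J" "j \<noteq> k" for j
      using that by (intro aT span_base) (auto simp: T_def)
    obtain i where ai: "a $ i \<noteq> 0" using a0 by (auto simp: vec_eq_iff)
    obtain c' where c': "axis i (1::int) = (\<Sum>j\<in>J. c' j *s v j)" using spanJ by blast
    have "a $ i = a \<bullet> rvec (axis i (1::int))"
      by (simp add: rvec_def inner_vec_def axis_def if_distrib cong: if_cong)
    also have "\<dots> = (\<Sum>j\<in>J. real_of_int (c' j) * (a \<bullet> rvec (v j)))"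
      by (simp add: c' rvec_sum rvec_smult inner_sum_right)
    also have "\<dots> = real_of_int (c' k) * (a \<bullet> rvec (v k))"
      using kJ finJ aoth by (subst sum.remove[of _ k]) auto
    finally have avk: "a \<bullet> rvec (v k) \<noteq> 0" using ai by auto
    define d where "d = (a \<bullet> rvec (v k)) *\<^sub>R a"
    have dk: "rvec (v k) \<bullet> d > 0" using avk by (auto simp: d_def inner_commute zero_less_mult_iff)
    have doth: "rvec (v j) \<bullet> d = 0" if "j \<in> J" "j \<noteq> k" for j
      using aoth[OF that] by (simp add: d_def inner_commute)
    have ev: "\<forall>\<^sub>F t in at_right 0. 0 < t \<and> (\<forall>j\<in>{..<m} - J. ell v lam j (p + t *\<^sub>R d) > 0)"
    proof (intro eventually_conj eventually_at_right_less eventually_ball_finite ballI)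
      show "finite ({..<m} - J)" by simp
      fix j assume j: "j \<in> {..<m} - J"
      have "ell v lam j p \<ge> 0" using pP j by (auto simp: P_def polytopeP_def)
      moreover have "ell v lam j p \<noteq> 0" using j by (auto simp: J_def)
      ultimately have pos: "ell v lam j p > 0" by simp
      have eq: "ell v lam j (p + t *\<^sub>R d) = ell v lam j p + t * (rvec (v j) \<bullet> d)" for t
        by (simp add: ell_def inner_add_right)
      have "((\<lambda>t. ell v lam j p + t * (rvec (v j) \<bullet> d)) \<longlongrightarrow> ell v lam j p + 0 * (rvec (v j) \<bullet> d)) (at_right 0)"
        by (intro tendsto_intros)
      then have "((\<lambda>t. ell v lam j (p + t *\<^sub>R d)) \<longlongrightarrow> ell v lam j p) (at_right 0)"
        by (simp add: eq)
      then show "\<forall>\<^sub>F t in at_right 0. ell v lam j (p + t *\<^sub>R d) > 0"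
        using pos order_tendstoD(1) by blast
    qed
    then obtain t where t0: "0 < t" and tj: "\<And>j. j \<in> {..<m} - J \<Longrightarrow> ell v lam j (p + t *\<^sub>R d) > 0"
      using eventually_happens[OF ev] by auto
    have "p + t *\<^sub>R d \<in> P"
      unfolding P_def polytopeP_def
    proof (intro CollectI allI impI)
      fix j assume jm: "j < m"
      show "0 \<le> ell v lam j (p + t *\<^sub>R d)"
      proof (cases "j \<in> J")
        case True
        then have "ell v lam j p = 0" by (auto simp: J_def)
        moreover have "rvec (v j) \<bullet> d \<ge> 0" using True dk doth by (cases "j = k") auto
        ultimately show ?thesis using t0 by (simp add: ell_def inner_add_right)
      next
        case False then show ?thesis using tj jm by (simp add: less_imp_le)
      qed
    qed
    from pmin[OF this] have "0 \<le> t * (rvec f \<bullet> d)" by (simp add: inner_add_right)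
    then have fd: "0 \<le> rvec f \<bullet> d" using t0 by (simp add: zero_le_mult_iff)
    have "rvec f \<bullet> d = (\<Sum>j\<in>J. real_of_int (c j) * (rvec (v j) \<bullet> d))"
      by (simp add: c rvec_sum rvec_smult inner_sum_left)
    also have "\<dots> = real_of_int (c k) * (rvec (v k) \<bullet> d)"
      using kJ finJ doth by (subst sum.remove[of _ k]) auto
    finally have "0 \<le> real_of_int (c k) * (rvec (v k) \<bullet> d)" using fd by simp
    then show ?thesis using dk by (simp add: zero_le_mult_iff)
  qed
  define F where "F j = (if j \<in> J then nat (c j) else 0)" for j
  have "(\<Sum>j<m. of_nat (F j) *s v j) = (\<Sum>j\<in>J. of_nat (F j) *s v j)"
    using Jm by (intro sum.mono_neutral_right) (auto simp: F_def)
  also have "\<dots> = f" unfolding c using cpos by (intro sum.cong) (auto simp: F_def)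
  finally have s1: "(\<Sum>j<m. of_nat (F j) *s v j) = f" .
  have "(\<Sum>j<m. real (F j) * lam j) = (\<Sum>j\<in>J. real (F j) * lam j)"
    using Jm by (intro sum.mono_neutral_right) (auto simp: F_def)
  also have "\<dots> = (\<Sum>j\<in>J. real_of_int (c j) * (rvec (v j) \<bullet> p))"
    using cpos by (intro sum.cong) (auto simp: F_def J_def ell_def)
  also have "\<dots> = rvec f \<bullet> p"
    by (simp add: c rvec_sum rvec_smult inner_sum_left)
  finally have s2: "(\<Sum>j<m. real (F j) * lam j) = rvec f \<bullet> p" .
  have "wtP P f \<le> rvec f \<bullet> p" by (rule wtP_le) (use cP bP iP pP in auto)
  then show ?thesis using s1 s2 unfolding P_def by (intro exI[of _ F]) simp
qed

lemma vT_le: "a l \<noteq> 0 \<Longrightarrow> vT a \<le> ereal l"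
  unfolding vT_def by (rule INF_lower) simp

lemma vT_ge: "(\<And>l. a l \<noteq> 0 \<Longrightarrow> c \<le> ereal l) \<Longrightarrow> c \<le> vT a"
  unfolding vT_def by (rule INF_greatest) simp

lemma valP_le: "x k \<noteq> 0 \<Longrightarrow> valP P x \<le> ereal (fst k + wtP P (snd (snd k)))"
  unfolding valP_def by (rule INF_lower) simp

lemma valP_ge: "(\<And>k. x k \<noteq> 0 \<Longrightarrow> c \<le> ereal (fst k + wtP P (snd (snd k)))) \<Longrightarrow> c \<le> valP P x"
  unfolding valP_def by (rule INF_greatest) simp

lemma fin_le:
  assumes "(g \<longlongrightarrow> \<infinity>) sequentially"
  shows "finite {k. g k \<le> ereal C}"
proof -
  from assms have "eventually (\<lambda>k. ereal C < g k) sequentially" by (simp add: tendsto_PInfty)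
  then obtain N where "\<And>k. k \<ge> N \<Longrightarrow> ereal C < g k" by (auto simp: eventually_sequentially)
  then have "{k. g k \<le> ereal C} \<subseteq> {..<N}" by (auto simp: not_less[symmetric])
  then show ?thesis using finite_subset by blast
qed

lemma wtP_lower:
  fixes v :: "nat \<Rightarrow> int^'n"
  assumes dz: "delzant m v lam"
  shows "(\<Sum>j<m. real (F j) * lam j) \<le> wtP (polytopeP m v lam) (\<Sum>j<m. of_nat (F j) *s v j)"
proof (rule wtP_ge)
  show "interior (polytopeP m v lam) \<noteq> {}" using dz by (simp add: delzant_def Let_def)
  fix u assume u: "u \<in> polytopeP m v lam"
  have "(\<Sum>j<m. real (F j) * lam j) \<le> (\<Sum>j<m. real (F j) * (rvec (v j) \<bullet> u))"
    using u by (intro sum_mono mult_left_mono) (auto simp: polytopeP_def ell_def)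
  also have "\<dots> = rvec (\<Sum>j<m. of_nat (F j) *s v j) \<bullet> u"
    by (simp add: rvec_sum rvec_smult inner_sum_left)
  finally show "(\<Sum>j<m. real (F j) * lam j) \<le> rvec (\<Sum>j<m. of_nat (F j) *s v j) \<bullet> u" .
qed

lemma part1:
  fixes v :: "nat \<Rightarrow> int^'n" and a :: "nat \<Rightarrow> real \<Rightarrow> 'r::ab_group_add"
  assumes dz: "delzant m v lam" and sd: "series_data m B a E"
  shows "\<exists>x\<in>completion0P (polytopeP m v lam) m B.
           series_converges_to (polytopeP m v lam) m v lam a E F x"
proof -
  define P where "P = polytopeP m v lam"
  define tm where "tm k = series_term m v lam (a k) (E k) (F k)" for k
  define c where "c k = (\<Sum>j<m. real (F k j) * lam j)" for k
  define fk where "fk k = (\<Sum>j<m. of_nat (F k j) *s v j)" for k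
  define val where "val key = fst key + wtP P (snd (snd key))" for key :: "real \<times> (nat \<Rightarrow> int) \<times> (int^'n)"
  have nov: "\<And>k. novikov (a k)" and vT0: "\<And>k. vT (a k) \<ge> 0" and adm: "\<And>k. admissible_exp m B (E k)"
    and lim: "((\<lambda>k. vT (a k)) \<longlongrightarrow> \<infinity>) sequentially"
    using sd by (auto simp: series_data_def)
  have tm_nz: "tm k key \<noteq> 0 \<longleftrightarrow> snd key = (E k, fk k) \<and> a k (fst key + c k) \<noteq> 0" for k key
    by (cases key) (auto simp: tm_def series_term_def c_def fk_def)
  have tm_val: "vT (a k) \<le> ereal (val key)" if "tm k key \<noteq> 0" for k key
  proof -
    from that have s: "snd key = (E k, fk k)" and nz: "a k (fst key + c k) \<noteq> 0" by (auto simp: tm_nz)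
    have "c k \<le> wtP P (fk k)" unfolding c_def fk_def P_def by (rule wtP_lower[OF dz])
    then have "fst key + c k \<le> val key" using s by (simp add: val_def)
    then show ?thesis using vT_le[of "a k" "fst key + c k", OF nz] by (meson ereal_less_eq(3) order_trans)
  qed
  have finK: "finite {k. tm k key \<noteq> 0}" for key
    by (rule finite_subset[OF _ fin_le[OF lim, of "val key"]]) (use tm_val in blast)
  define x where "x key = (\<Sum>k\<in>{k. tm k key \<noteq> 0}. tm k key)" for key
  have x_nz: "\<exists>k. tm k key \<noteq> 0" if "x key \<noteq> 0" for key
    using that unfolding x_def by (meson sum.neutral mem_Collect_eq)
  have diff: "x key - (\<Sum>k<N. tm k key) = (\<Sum>k\<in>{k. tm k key \<noteq> 0} - {..<N}. tm k key)" for key N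
  proof -
    have "(\<Sum>k<N. tm k key) = (\<Sum>k\<in>{k. tm k key \<noteq> 0} \<inter> {..<N}. tm k key)"
      by (intro sum.mono_neutral_right) auto
    moreover have "x key = (\<Sum>k\<in>{k. tm k key \<noteq> 0} \<inter> {..<N}. tm k key) + (\<Sum>k\<in>{k. tm k key \<noteq> 0} - {..<N}. tm k key)"
      unfolding x_def using finK[of key] by (metis sum.Int_Diff)
    ultimately show ?thesis by simp
  qed
  have inC: "x \<in> completion0P P m B"
    unfolding completion0P_def completionP_def
  proof (intro CollectI conjI allI impI)
    fix key assume "x key \<noteq> 0"
    then obtain k where "tm k key \<noteq> 0" using x_nz by blast
    then show "admissible_exp m B (fst (snd key))" using adm by (auto simp: tm_nz)
  next
    fix C
    have "{key. x key \<noteq> 0 \<and> fst key + wtP P (snd (snd key)) \<le> C} \<subseteq>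
          (\<Union>k\<in>{k. vT (a k) \<le> ereal C}. (\<lambda>l. (l - c k, E k, fk k)) ` {l. a k l \<noteq> 0 \<and> l \<le> C})"
    proof
      fix key assume kk: "key \<in> {key. x key \<noteq> 0 \<and> fst key + wtP P (snd (snd key)) \<le> C}"
      then obtain k where t: "tm k key \<noteq> 0" using x_nz by blast
      then have s: "snd key = (E k, fk k)" and nz: "a k (fst key + c k) \<noteq> 0" by (auto simp: tm_nz)
      have "c k \<le> wtP P (fk k)" unfolding c_def fk_def P_def by (rule wtP_lower[OF dz])
      then have le: "fst key + c k \<le> C" using kk s by auto
      have "vT (a k) \<le> ereal C" using vT_le[of "a k" "fst key + c k", OF nz] le by (meson ereal_less_eq(3) order_trans)
      moreover have "key = (\<lambda>l. (l - c k, E k, fk k)) (fst key + c k)" using s by (cases key) auto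
      ultimately show "key \<in> (\<Union>k\<in>{k. vT (a k) \<le> ereal C}. (\<lambda>l. (l - c k, E k, fk k)) ` {l. a k l \<noteq> 0 \<and> l \<le> C})"
        using nz le by blast
    qed
    moreover have "finite (\<Union>k\<in>{k. vT (a k) \<le> ereal C}. (\<lambda>l. (l - c k, E k, fk k)) ` {l. a k l \<noteq> 0 \<and> l \<le> C})"
      using fin_le[OF lim] nov by (auto simp: novikov_def)
    ultimately show "finite {key. x key \<noteq> 0 \<and> fst key + wtP P (snd (snd key)) \<le> C}"
      by (rule finite_subset)
  next
    show "0 \<le> valP P x"
    proof (rule valP_ge)
      fix key assume "x key \<noteq> 0"
      then obtain k where "tm k key \<noteq> 0" using x_nz by blast
      then show "0 \<le> ereal (fst key + wtP P (snd (snd key)))"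
        using tm_val vT0 unfolding val_def by (meson order_trans)
    qed
  qed
  have conv: "((\<lambda>N. valP P (\<lambda>key. x key - (\<Sum>k<N. tm k key))) \<longlongrightarrow> \<infinity>) sequentially"
    unfolding tendsto_PInfty
  proof
    fix r :: real
    from lim have "eventually (\<lambda>k. ereal (r + 1) < vT (a k)) sequentially" by (simp add: tendsto_PInfty)
    then obtain N0 where N0: "\<And>k. k \<ge> N0 \<Longrightarrow> ereal (r + 1) < vT (a k)" by (auto simp: eventually_sequentially)
    show "eventually (\<lambda>N. ereal r < valP P (\<lambda>key. x key - (\<Sum>k<N. tm k key))) sequentially"
      unfolding eventually_sequentially
    proof (intro exI allI impI)
      fix N assume N: "N \<ge> N0"
      have "ereal (r + 1) \<le> valP P (\<lambda>key. x key - (\<Sum>k<N. tm k key))"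
      proof (rule valP_ge)
        fix key assume "x key - (\<Sum>k<N. tm k key) \<noteq> 0"
        then obtain k where k: "tm k key \<noteq> 0" "k \<ge> N"
          unfolding diff by (metis (no_types, lifting) DiffE lessThan_iff mem_Collect_eq not_less sum.neutral)
        then have "ereal (r + 1) < ereal (val key)" using N0[of k] N tm_val[OF k(1)] by (meson le_trans less_le_trans)
        then show "ereal (r + 1) \<le> ereal (fst key + wtP P (snd (snd key)))"
          by (simp add: val_def)
      qed
      then show "ereal r < valP P (\<lambda>key. x key - (\<Sum>k<N. tm k key))"
        using less_le_trans[of "ereal r" "ereal (r + 1)"] by simp
    qed
  qed
  show ?thesis
    using inC conv unfolding series_converges_to_def P_def tm_def by blast
qed

lemma part2:
  fixes v :: "nat \<Rightarrow> int^'n" and x :: "real \<times> (nat \<Rightarrow> int) \<times> (int^'n) \<Rightarrow> 'r::ab_group_add"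
  assumes dz: "delzant m v lam" and xC: "x \<in> completion0P (polytopeP m v lam) m B"
  shows "\<exists>a E F. series_data m B a E \<and> series_converges_to (polytopeP m v lam) m v lam a E F x"
proof -
  define P where "P = polytopeP m v lam"
  define val where "val key = fst key + wtP P (snd (snd key))" for key :: "real \<times> (nat \<Rightarrow> int) \<times> (int^'n)"
  define S where "S = {key. x key \<noteq> 0}"
  have admx: "\<And>key. key \<in> S \<Longrightarrow> admissible_exp m B (fst (snd key))"
    and finx: "\<And>C. finite {key \<in> S. val key \<le> C}" and v0: "0 \<le> valP P x"
    using xC unfolding completion0P_def completionP_def S_def val_def P_def by (auto simp del: split_paired_All)
  have pos: "0 \<le> val key" if "key \<in> S" for key
  proof -
    have "0 \<le> ereal (val key)" using order_trans[OF v0 valP_le[of x key P]] that by (simp add: S_def val_def)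
    then show ?thesis by simp
  qed
  have cS: "countable S"
  proof (rule countable_subset)
    show "S \<subseteq> (\<Union>n::nat. {key \<in> S. val key \<le> real n})"
      using real_arch_simple by blast
    show "countable (\<Union>n::nat. {key \<in> S. val key \<le> real n})"
      by (rule countable_UN[OF countableI_type]) (rule countable_finite, rule finx)
  qed
  have "\<forall>f. \<exists>G::nat\<Rightarrow>nat. (\<Sum>j<m. of_nat (G j) *s v j) = f \<and> wtP P f \<le> (\<Sum>j<m. real (G j) * lam j)"
    using exists_F[OF dz] unfolding P_def by blast
  then obtain Fo where Fo: "\<And>f. (\<Sum>j<m. of_nat (Fo f j) *s v j) = f"
      "\<And>f. wtP P f \<le> (\<Sum>j<m. real (Fo f j) * lam j)"
    by metis
  define idx where "idx = to_nat_on S"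
  define kf where "kf = from_nat_into S"
  define cF where "cF key = (\<Sum>j<m. real (Fo (snd (snd key)) j) * lam j)" for key :: "real \<times> (nat \<Rightarrow> int) \<times> (int^'n)"
  have cF_ge: "val key \<le> fst key + cF key" for key
    using Fo(2)[of "snd (snd key)"] by (simp add: val_def cF_def)
  have idx_inj: "\<And>k1 k2. k1 \<in> S \<Longrightarrow> k2 \<in> S \<Longrightarrow> idx k1 = idx k2 \<longleftrightarrow> k1 = k2"
    using cS by (simp add: idx_def)
  have kf_idx: "\<And>key. key \<in> S \<Longrightarrow> kf (idx key) = key"
    using cS by (simp add: idx_def kf_def)
  define a where "a k l = (if k \<in> idx ` S \<and> l = fst (kf k) + cF (kf k) then x (kf k) else 0)" for k l
  define E where "E k = (if k \<in> idx ` S then fst (snd (kf k)) else (\<lambda>_. 0))" for k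
  define F where "F k = Fo (snd (snd (kf k)))" for k
  have vTa: "ereal (val (kf k)) \<le> vT (a k)" for k
    by (rule vT_ge) (auto simp: a_def cF_ge split: if_splits)
  have vTinf: "vT (a k) = \<infinity>" if "k \<notin> idx ` S" for k
    using that unfolding vT_def a_def by (simp add: top_ereal_def)
  have sd: "series_data m B a E"
    unfolding series_data_def
  proof (intro conjI allI)
    fix k
    show "novikov (a k)" unfolding novikov_def
      by (auto intro: finite_subset[of _ "{fst (kf k) + cF (kf k)}"] simp: a_def)
    show "0 \<le> vT (a k)"
    proof (cases "k \<in> idx ` S")
      case True
      then obtain key where "key \<in> S" "k = idx key" by blast
      then have "0 \<le> val (kf k)" using pos kf_idx by simp
      then show ?thesis using vTa[of k] by (meson ereal_less_eq(5) order_trans)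
    qed (simp add: vTinf)
    show "admissible_exp m B (E k)"
    proof (cases "k \<in> idx ` S")
      case True
      then obtain key where "key \<in> S" "k = idx key" by blast
      then show ?thesis using admx kf_idx by (simp add: E_def)
    qed (simp add: E_def admissible_exp_def)
  next
    show "((\<lambda>k. vT (a k)) \<longlongrightarrow> \<infinity>) sequentially"
      unfolding tendsto_PInfty
    proof
      fix r
      obtain N where N: "idx ` {key \<in> S. val key \<le> r} \<subseteq> {..<N}"
        using finite_nat_bounded finx by blast
      show "eventually (\<lambda>k. ereal r < vT (a k)) sequentially"
        unfolding eventually_sequentially
      proof (intro exI allI impI)
        fix k assume k: "N \<le> k"
        show "ereal r < vT (a k)"
        proof (cases "k \<in> idx ` S")
          case True
          then obtain key where key: "key \<in> S" "k = idx key" by blast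
          then have "\<not> val key \<le> r" using N k by auto
          then have "ereal r < ereal (val (kf k))" using key kf_idx by simp
          then show ?thesis using vTa[of k] by (meson less_le_trans)
        qed (simp add: vTinf)
      qed
    qed
  qed
  have tm: "series_term m v lam (a k) (E k) (F k) key = (if k = idx key then (if key \<in> S then x key else 0) else 0)"
    for k key
  proof (cases "k \<in> idx ` S")
    case False
    then show ?thesis by (cases key) (auto simp: series_term_def a_def)
  next
    case True
    then obtain key0 where key0: "key0 \<in> S" "k = idx key0" by blast
    obtain mu E' f' where kk: "key = (mu, E', f')" by (cases key)
    have kfk: "kf k = key0" using key0 kf_idx by simp
    show ?thesis
    proof (cases "key = key0")
      case True
      then have k0: "key0 = (mu, E', f')" using kk by simp
      have "kf k = (mu, E', f')" "k \<in> idx ` S" "key \<in> S" "k = idx key" using kfk k0 key0 True by auto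
      then show ?thesis using Fo(1)[of f'] unfolding kk
        by (simp add: series_term_def a_def E_def F_def cF_def)
    next
      case False
      have "series_term m v lam (a k) (E k) (F k) key = 0"
        using False True kfk Fo(1)[of "snd (snd key0)"] unfolding kk
        by (cases key0) (auto simp: series_term_def a_def E_def F_def cF_def)
      moreover have "\<not> (k = idx key \<and> key \<in> S)" using False key0 idx_inj[of key key0] by auto
      ultimately show ?thesis by auto
    qed
  qed
  have psum: "(\<Sum>k<N. series_term m v lam (a k) (E k) (F k) key) = (if key \<in> S \<and> idx key < N then x key else 0)"
    for N key
    unfolding tm by (simp add: sum.delta')
  have conv: "series_converges_to P m v lam a E F x"
    unfolding series_converges_to_def psum tendsto_PInfty
  proof
    fix r :: real
    obtain N where N: "idx ` {key \<in> S. val key \<le> r + 1} \<subseteq> {..<N}"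
      using finite_nat_bounded finx by blast
    show "eventually (\<lambda>M. ereal r < valP P (\<lambda>key. x key - (if key \<in> S \<and> idx key < M then x key else 0))) sequentially"
      unfolding eventually_sequentially
    proof (intro exI allI impI)
      fix M assume M: "N \<le> M"
      have "ereal (r + 1) \<le> valP P (\<lambda>key. x key - (if key \<in> S \<and> idx key < M then x key else 0))"
      proof (rule valP_ge)
        fix key assume nz: "x key - (if key \<in> S \<and> idx key < M then x key else 0) \<noteq> 0"
        then have "key \<in> S" "\<not> idx key < M" by (auto simp: S_def split: if_splits)
        then have "\<not> val key \<le> r + 1" using N M by auto
        then show "ereal (r + 1) \<le> ereal (fst key + wtP P (snd (snd key)))" by (simp add: val_def)
      qed
      then show "ereal r < valP P (\<lambda>key. x key - (if key \<in> S \<and> idx key < M then x key else 0))"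
        using less_le_trans[of "ereal r" "ereal (r + 1)"] by simp
    qed
  qed
  show ?thesis using sd conv unfolding P_def by blast
qed

theorem lemma3p9:
  fixes v :: "nat \<Rightarrow> int^'n" and lam :: "nat \<Rightarrow> real" and m B :: nat
  assumes "delzant m v lam" and "m \<le> B"
  shows "(\<forall>(a :: nat \<Rightarrow> real \<Rightarrow> 'r::field_char_0) E F. series_data m B a E \<longrightarrow>
            (\<exists>x\<in>completion0P (polytopeP m v lam) m B.
               series_converges_to (polytopeP m v lam) m v lam a E F x))
       \<and> (\<forall>x :: real \<times> (nat \<Rightarrow> int) \<times> (int^'n) \<Rightarrow> 'r. x \<in> completion0P (polytopeP m v lam) m B \<longrightarrow>
            (\<exists>a E F. series_data m B a E \<and>
               series_converges_to (polytopeP m v lam) m v lam a E F x))"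
  using part1[OF assms(1)] part2[OF assms(1)] by blast

end
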